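(* Let $z\sim\mathcal{N}(0,1)$ and $u\sim\mathcal{N}(0,I_k)$. Let $\alpha_0=\mathbb{E}[\phi'(z)]$, $\alpha_1=\mathbb{E}[\phi'(z)z]$, $\alpha_2=\mathbb{E}[\phi'(z)z^2]$, $\beta_0=\mathbb{E}[\phi'(z)^2]$, $\beta_2=\mathbb{E}[\phi'(z)^2z^2]$ (all assumed finite), and $\rho=\min\{\beta_0-\alpha_0^2-\alpha_1^2,\ \beta_2-\alpha_1^2-\alpha_2^2\}$. Then for every matrix $P=[p_1,p_2,\dots,p_k]\in\mathbb{R}^{k\times k}$ (with columns $p_i$), $$\mathbb{E}_{u}\Big[\Big(\sum_{i=1}^kp_i^\top u\cdot\phi'(u_i)\Big)^2\Big]\ge\rho\|P\|_F^2 .$$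
   Context: $\phi'$ is the (left) derivative of the activation function $\phi:\mathbb{R}\to\mathbb{R}$; $u_i$ is the $i$-th coordinate of $u$. *)

theory Defs
  imports "HOL-Probability.Probability"
begin

definition stdGauss :: "real measure" where
  "stdGauss = density lborel std_normal_density"

text \<open>Standard Gaussian N(0, I_k) on R^k, vectors represented as functions
  nat => real on the index set {0..<k} (product measure of k independent N(0,1)).\<close>
definition stdGaussVec :: "nat \<Rightarrow> (nat \<Rightarrow> real) measure" where
  "stdGaussVec k = PiM {..<k} (\<lambda>_. stdGauss)"

end

theory Submission
  imports Defs
begin

lemma ps_sg: "prob_space stdGauss"
  unfolding stdGauss_def by (rule prob_space_normal_density) simp

lemma sg_moment:
  "integrable stdGauss (\<lambda>x. x ^ n)"
  "integral\<^sup>L stdGauss (\<lambda>x. x ^ n) = integral\<^sup>L lborel (\<lambda>x. std_normal_density x * x ^ n)"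
proof -
  have m: "(\<lambda>x::real. x ^ n) \<in> borel_measurable lborel" by measurable
  show "integrable stdGauss (\<lambda>x. x ^ n)"
    unfolding stdGauss_def
    by (subst integrable_density) (auto simp: normal_density_nonneg integrable_std_normal_moment)
  show "integral\<^sup>L stdGauss (\<lambda>x. x ^ n) = integral\<^sup>L lborel (\<lambda>x. std_normal_density x * x ^ n)"
    unfolding stdGauss_def
    by (subst integral_density) (auto simp: normal_density_nonneg)
qed

lemma sg_m1: "integral\<^sup>L stdGauss (\<lambda>x. x) = 0"
  using sg_moment(2)[of 1] integral_std_normal_moment_odd[of 0] by simp

lemma sg_m2: "integral\<^sup>L stdGauss (\<lambda>x. x^2) = 1"
  using sg_moment(2)[of 2] integral_std_normal_moment_even[of 1] by simp

lemma sg_int1: "integrable stdGauss (\<lambda>x. x)"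
  using sg_moment(1)[of 1] by simp

lemma sg_m0: "integral\<^sup>L stdGauss (\<lambda>x. 1::real) = 1"
  by (simp add: prob_space.prob_space[OF ps_sg])

definition mom :: "(real \<Rightarrow> real) \<Rightarrow> nat \<Rightarrow> nat \<Rightarrow> real" where
  "mom f a b = integral\<^sup>L stdGauss (\<lambda>x. x ^ a * f x ^ b)"

definition cnt :: "nat \<Rightarrow> nat \<Rightarrow> nat \<Rightarrow> nat" where
  "cnt l a b = (if l = a then 1 else 0) + (if l = b then 1 else 0)"

lemma cnt_le: "cnt l a b \<le> 2" by (simp add: cnt_def)

lemma psf: "product_sigma_finite (\<lambda>_::nat. stdGauss)"
  unfolding product_sigma_finite_def
  using ps_sg prob_space_imp_sigma_finite by blast

lemma prod_delta_pow: "(a::nat) < k \<Longrightarrow> (\<Prod>l<k. (y l::real) ^ (if l = a then 1 else 0)) = y a"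
proof -
  assume "a < k"
  have "(\<Prod>l<k. (y l::real) ^ (if l = a then 1 else 0)) = (\<Prod>l<k. if l = a then y l else 1)"
    by (rule prod.cong) auto
  also have "\<dots> = y a" using \<open>a < k\<close> by (subst prod.delta) auto
  finally show ?thesis .
qed

lemma term_prod:
  fixes k :: nat and u :: "nat \<Rightarrow> real"
  assumes "i < k" "j < k" "i' < k" "j' < k"
  shows "u j * f (u i) * u j' * f (u i') = (\<Prod>l<k. u l ^ cnt l j j' * f (u l) ^ cnt l i i')"
proof -
  have "(\<Prod>l<k. u l ^ cnt l j j' * f (u l) ^ cnt l i i') =
     (\<Prod>l<k. u l ^ (if l = j then 1 else 0)) * (\<Prod>l<k. u l ^ (if l = j' then 1 else 0)) *
     ((\<Prod>l<k. f (u l) ^ (if l = i then 1 else 0)) * (\<Prod>l<k. f (u l) ^ (if l = i' then 1 else 0)))"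
    by (simp add: cnt_def power_add prod.distrib)
  also have "\<dots> = u j * u j' * (f (u i) * f (u i'))"
    using assms by (simp add: prod_delta_pow)
  finally show ?thesis by simp
qed

definition cform :: "real \<Rightarrow> real \<Rightarrow> real \<Rightarrow> real \<Rightarrow> real \<Rightarrow> nat \<Rightarrow> nat \<Rightarrow> nat \<Rightarrow> nat \<Rightarrow> real" where
  "cform a0 a1 a2 b0 b2 i j i' j' =
     a1\<^sup>2 * ((if j = i \<and> j' = i' then 1 else 0) + (if j = i' \<and> j' = i then 1 else 0))
   + (if j = j' then a0\<^sup>2 + (a0 * a2 - a0\<^sup>2) * ((if j = i then 1 else 0) + (if j = i' then 1 else 0)) else 0)
   + (if i = i' \<and> j = j' then b0 - a0\<^sup>2 + (if j = i then b2 - b0 - 2 * a1\<^sup>2 - 2 * a0 * a2 + 2 * a0\<^sup>2 else 0) else 0)"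

lemma mom00: "mom f 0 0 = 1" by (simp add: mom_def prob_space.prob_space[OF ps_sg])
lemma mom10: "mom f 1 0 = 0" by (simp add: mom_def sg_m1)
lemma mom20: "mom f 2 0 = 1" by (simp add: mom_def sg_m2)

lemma prod_cform:
  fixes k :: nat
  assumes "i < k" "j < k" "i' < k" "j' < k"
  shows "(\<Prod>l<k. mom f (cnt l j j') (cnt l i i')) =
    cform (mom f 0 1) (mom f 1 1) (mom f 2 1) (mom f 0 2) (mom f 2 2) i j i' j'"
proof -
  have "(\<Prod>l<k. mom f (cnt l j j') (cnt l i i')) = (\<Prod>l\<in>{i,j,i',j'}. mom f (cnt l j j') (cnt l i i'))"
    by (rule prod.mono_neutral_right) (use assms in \<open>auto simp: cnt_def mom00\<close>)
  also have "\<dots> = cform (mom f 0 1) (mom f 1 1) (mom f 2 1) (mom f 0 2) (mom f 2 2) i j i' j'"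
    by (cases "i = j"; cases "i = i'"; cases "i = j'"; cases "j = i'"; cases "j = j'"; cases "i' = j'")
       (simp_all add: cform_def cnt_def mom00 mom10[simplified] mom20[simplified numeral_2_eq_2] prod.insert_if numeral_2_eq_2 power2_eq_square algebra_simps)
  finally show ?thesis .
qed

lemma if_and0: "(if a \<and> b then x else (0::real)) = (if a then if b then x else 0 else 0)" by simp
lemma sum_if_const: "(\<Sum>x\<in>A. if c then g x else (0::real)) = (if c then \<Sum>x\<in>A. g x else 0)" by simp

lemma X1: "(\<Sum>i<k. \<Sum>j<k. \<Sum>i'<k. \<Sum>j'<k. P j i * P j' i' * (if j = i \<and> j' = i' then 1 else 0)) =
   (\<Sum>i<k. P i i) ^ 2" for P :: "nat \<Rightarrow> nat \<Rightarrow> real" and k :: nat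
  by (simp add: if_distrib[of "\<lambda>x. _ * x"] if_and0 sum_if_const sum.delta sum.delta' power2_eq_square sum_product cong: if_cong)

lemma X2: "(\<Sum>i<k. \<Sum>j<k. \<Sum>i'<k. \<Sum>j'<k. P j i * P j' i' * (if j = i' \<and> j' = i then 1 else 0)) =
   (\<Sum>i<k. \<Sum>i'<k. P i' i * P i i')" for P :: "nat \<Rightarrow> nat \<Rightarrow> real" and k :: nat
  by (simp add: if_distrib[of "\<lambda>x. _ * x"] if_and0 sum_if_const sum.delta sum.delta' power2_eq_square sum_product cong: if_cong)

lemma X3: "(\<Sum>i<k. \<Sum>j<k. \<Sum>i'<k. \<Sum>j'<k. P j i * P j' i' * (if j = j' then 1 else 0)) =
   (\<Sum>i<k. \<Sum>j<k. \<Sum>i'<k. P j i * P j i')" for P :: "nat \<Rightarrow> nat \<Rightarrow> real" and k :: nat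
  by (simp add: if_distrib[of "\<lambda>x. _ * x"] if_and0 sum_if_const sum.delta sum.delta' power2_eq_square sum_product cong: if_cong)

lemma X4: "(\<Sum>i<k. \<Sum>j<k. \<Sum>i'<k. \<Sum>j'<k. P j i * P j' i' * (if j = j' \<and> j = i then 1 else 0)) =
   (\<Sum>i<k. \<Sum>i'<k. P i i * P i i')" for P :: "nat \<Rightarrow> nat \<Rightarrow> real" and k :: nat
  by (simp add: if_distrib[of "\<lambda>x. _ * x"] if_and0 sum_if_const sum.delta sum.delta' power2_eq_square sum_product cong: if_cong)

lemma X5: "(\<Sum>i<k. \<Sum>j<k. \<Sum>i'<k. \<Sum>j'<k. P j i * P j' i' * (if j = j' \<and> j = i' then 1 else 0)) =
   (\<Sum>i<k. \<Sum>i'<k. P i' i * P i' i')" for P :: "nat \<Rightarrow> nat \<Rightarrow> real" and k :: nat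
  by (simp add: if_distrib[of "\<lambda>x. _ * x"] if_and0 sum_if_const sum.delta sum.delta' power2_eq_square sum_product cong: if_cong)

lemma X6: "(\<Sum>i<k. \<Sum>j<k. \<Sum>i'<k. \<Sum>j'<k. P j i * P j' i' * (if i = i' \<and> j = j' then 1 else 0)) =
   (\<Sum>i<k. \<Sum>j<k. P j i * P j i)" for P :: "nat \<Rightarrow> nat \<Rightarrow> real" and k :: nat
  by (simp add: if_distrib[of "\<lambda>x. _ * x"] if_and0 sum_if_const sum.delta sum.delta' power2_eq_square sum_product cong: if_cong)

lemma X7: "(\<Sum>i<k. \<Sum>j<k. \<Sum>i'<k. \<Sum>j'<k. P j i * P j' i' * (if i = i' \<and> j = j' \<and> j = i then 1 else 0)) =
   (\<Sum>i<k. P i i * P i i)" for P :: "nat \<Rightarrow> nat \<Rightarrow> real" and k :: nat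
  by (simp add: if_distrib[of "\<lambda>x. _ * x"] if_and0 sum_if_const sum.delta sum.delta' power2_eq_square sum_product cong: if_cong)

lemma cform_split: "cform a0 a1 a2 b0 b2 i j i' j' =
   a1\<^sup>2 * (if j = i \<and> j' = i' then 1 else 0) + a1\<^sup>2 * (if j = i' \<and> j' = i then 1 else 0)
 + a0\<^sup>2 * (if j = j' then 1 else 0) + (a0 * a2 - a0\<^sup>2) * (if j = j' \<and> j = i then 1 else 0)
 + (a0 * a2 - a0\<^sup>2) * (if j = j' \<and> j = i' then 1 else 0) + (b0 - a0\<^sup>2) * (if i = i' \<and> j = j' then 1 else 0)
 + (b2 - b0 - 2 * a1\<^sup>2 - 2 * a0 * a2 + 2 * a0\<^sup>2) * (if i = i' \<and> j = j' \<and> j = i then 1 else 0)"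
  by (simp add: cform_def algebra_simps)

lemma sum_cform: "(\<Sum>i<k. \<Sum>j<k. \<Sum>i'<k. \<Sum>j'<k. P j i * P j' i' * cform a0 a1 a2 b0 b2 i j i' j') =
   a1\<^sup>2 * (\<Sum>i<k. P i i) ^ 2 + a1\<^sup>2 * (\<Sum>i<k. \<Sum>i'<k. P i' i * P i i')
 + a0\<^sup>2 * (\<Sum>i<k. \<Sum>j<k. \<Sum>i'<k. P j i * P j i') + (a0 * a2 - a0\<^sup>2) * (\<Sum>i<k. \<Sum>i'<k. P i i * P i i')
 + (a0 * a2 - a0\<^sup>2) * (\<Sum>i<k. \<Sum>i'<k. P i' i * P i' i') + (b0 - a0\<^sup>2) * (\<Sum>i<k. \<Sum>j<k. P j i * P j i)
 + (b2 - b0 - 2 * a1\<^sup>2 - 2 * a0 * a2 + 2 * a0\<^sup>2) * (\<Sum>i<k. P i i * P i i)"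
  for P :: "nat \<Rightarrow> nat \<Rightarrow> real" and k :: nat
  unfolding X1[symmetric] X2[symmetric] X3[symmetric] X4[symmetric] X5[symmetric] X6[symmetric] X7[symmetric]
  unfolding cform_split
  by (simp only: distrib_left sum.distrib sum_distrib_left mult.left_commute)

lemma diag_le: "(\<And>i j. 0 \<le> g i j) \<Longrightarrow> (\<Sum>i<k. g i i) \<le> (\<Sum>i<k::nat. \<Sum>j<k. (g i j::real))"
  by (rule sum_mono) (rule member_le_sum, auto)

lemma final_ineq:
  fixes P :: "nat \<Rightarrow> nat \<Rightarrow> real" and k :: nat and a0 a1 a2 b0 b2 :: real
  shows "a1\<^sup>2 * (\<Sum>i<k. P i i) ^ 2 + a1\<^sup>2 * (\<Sum>i<k. \<Sum>i'<k. P i' i * P i i')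
 + a0\<^sup>2 * (\<Sum>i<k. \<Sum>j<k. \<Sum>i'<k. P j i * P j i') + (a0 * a2 - a0\<^sup>2) * (\<Sum>i<k. \<Sum>i'<k. P i i * P i i')
 + (a0 * a2 - a0\<^sup>2) * (\<Sum>i<k. \<Sum>i'<k. P i' i * P i' i') + (b0 - a0\<^sup>2) * (\<Sum>i<k. \<Sum>j<k. P j i * P j i)
 + (b2 - b0 - 2 * a1\<^sup>2 - 2 * a0 * a2 + 2 * a0\<^sup>2) * (\<Sum>i<k. P i i * P i i)
 \<ge> min (b0 - a0\<^sup>2 - a1\<^sup>2) (b2 - a1\<^sup>2 - a2\<^sup>2) * (\<Sum>i<k. \<Sum>j<k. (P j i)\<^sup>2)"
proof -
  define D where "D = (\<Sum>i<k. P i i)"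
  define T where "T = (\<Sum>i<k. \<Sum>i'<k. P i' i * P i i')"
  define R where "R = (\<lambda>j. \<Sum>i<k. P j i)"
  define X3 where "X3 = (\<Sum>i<k. \<Sum>j<k. \<Sum>i'<k. P j i * P j i')"
  define X4 where "X4 = (\<Sum>i<k. \<Sum>i'<k. P i i * P i i')"
  define X5 where "X5 = (\<Sum>i<k. \<Sum>i'<k. P i' i * P i' i')"
  define F where "F = (\<Sum>i<k. \<Sum>j<k. P j i * P j i)"
  define E where "E = (\<Sum>i<k. P i i * P i i)"
  have X54: "X5 = X4" unfolding X5_def X4_def
    by (subst sum.swap) (simp add: mult.commute)
  have X4R: "X4 = (\<Sum>j<k. P j j * R j)" unfolding X4_def R_def by (simp add: sum_distrib_left)
  have X3R: "X3 = (\<Sum>j<k. R j * R j)" unfolding X3_def R_def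
    by (subst sum.swap) (simp add: sum_product)
  have c: "a0\<^sup>2 * X3 + 2 * (a0 * a2 - a0\<^sup>2) * X4 \<ge> - (a2 - a0)\<^sup>2 * E"
  proof -
    have "0 \<le> (\<Sum>j<k. (a0 * R j + (a2 - a0) * P j j)\<^sup>2)" by (simp add: sum_nonneg)
    also have "\<dots> = a0\<^sup>2 * X3 + 2 * (a0 * a2 - a0\<^sup>2) * X4 + (a2 - a0)\<^sup>2 * E"
    proof -
      have pw: "\<And>j. (a0 * R j + (a2 - a0) * P j j)\<^sup>2 = a0\<^sup>2 * (R j * R j) + (2 * (a0 * a2 - a0\<^sup>2)) * (P j j * R j)
          + (a2 - a0)\<^sup>2 * (P j j * P j j)"
        by (simp add: power2_eq_square algebra_simps)
      show ?thesis unfolding X3R X4R E_def pw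
        by (simp add: sum.distrib sum_distrib_left)
    qed
    finally show ?thesis by linarith
  qed
  have d: "T + F \<ge> 2 * E"
  proof -
    have "(\<Sum>i<k. (P i i + P i i)\<^sup>2) \<le> (\<Sum>i<k. \<Sum>i'<k. (P i i' + P i' i)\<^sup>2)"
      by (rule diag_le[of "\<lambda>i i'. (P i i' + P i' i)\<^sup>2"]) simp
    moreover have "(\<Sum>i<k. (P i i + P i i)\<^sup>2) = 4 * E"
      unfolding E_def by (simp add: power2_eq_square sum_distrib_left algebra_simps)
    moreover have "(\<Sum>i<k. \<Sum>i'<k. (P i i' + P i' i)\<^sup>2) = (\<Sum>i<k. \<Sum>i'<k. P i i' * P i i') + 2 * T + F"
    proof -
      have "(\<Sum>i<k. \<Sum>i'<k. P i i' * P i i') = F" unfolding F_def by (subst sum.swap) simp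
      moreover have "(\<Sum>i<k. \<Sum>i'<k. (P i i' + P i' i)\<^sup>2) =
        (\<Sum>i<k. \<Sum>i'<k. P i i' * P i i') + 2 * (\<Sum>i<k. \<Sum>i'<k. P i' i * P i i') + (\<Sum>i<k. \<Sum>i'<k. P i' i * P i' i)"
        by (simp add: power2_eq_square algebra_simps sum.distrib sum_distrib_left)
      ultimately show ?thesis unfolding T_def F_def by simp
    qed
    moreover have "(\<Sum>i<k. \<Sum>i'<k. P i i' * P i i') = F" unfolding F_def by (subst sum.swap) simp
    ultimately show ?thesis by linarith
  qed
  have e: "F \<ge> E" unfolding F_def E_def
    by (rule diag_le[of "\<lambda>i j. P j i * P j i"]) simp
  have E0: "E \<ge> 0" unfolding E_def by (simp add: sum_nonneg)
  have FF: "(\<Sum>i<k. \<Sum>j<k. (P j i)\<^sup>2) = F" unfolding F_def by (simp add: power2_eq_square)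
  define r0 where "r0 = b0 - a0\<^sup>2 - a1\<^sup>2"
  define r2 where "r2 = b2 - a1\<^sup>2 - a2\<^sup>2"
  have aT: "a1\<^sup>2 * T \<ge> a1\<^sup>2 * (2 * E - F)" using d by (intro mult_left_mono) auto
  have D0: "a1\<^sup>2 * D ^ 2 \<ge> 0" by simp
  have lhs: "a1\<^sup>2 * D ^ 2 + a1\<^sup>2 * T + a0\<^sup>2 * X3 + (a0 * a2 - a0\<^sup>2) * X4 + (a0 * a2 - a0\<^sup>2) * X5
    + (b0 - a0\<^sup>2) * F + (b2 - b0 - 2 * a1\<^sup>2 - 2 * a0 * a2 + 2 * a0\<^sup>2) * E
    \<ge> a1\<^sup>2 * (2 * E - F) - (a2 - a0)\<^sup>2 * E + (b0 - a0\<^sup>2) * F + (b2 - b0 - 2 * a1\<^sup>2 - 2 * a0 * a2 + 2 * a0\<^sup>2) * E"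
  proof -
    have "(a0 * a2 - a0\<^sup>2) * X4 + (a0 * a2 - a0\<^sup>2) * X4 = 2 * (a0 * a2 - a0\<^sup>2) * X4" by simp
    then show ?thesis unfolding X54 using aT D0 c by linarith
  qed
  have eqn: "a1\<^sup>2 * (2 * E - F) - (a2 - a0)\<^sup>2 * E + (b0 - a0\<^sup>2) * F + (b2 - b0 - 2 * a1\<^sup>2 - 2 * a0 * a2 + 2 * a0\<^sup>2) * E
     = r0 * (F - E) + r2 * E"
    unfolding r0_def r2_def by (simp add: power2_eq_square algebra_simps)
  have m1: "r0 * (F - E) \<ge> min r0 r2 * (F - E)" using e by (intro mult_right_mono) auto
  have m2: "r2 * E \<ge> min r0 r2 * E" using E0 by (intro mult_right_mono) auto
  have "min r0 r2 * F = min r0 r2 * (F - E) + min r0 r2 * E" by (simp add: algebra_simps)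
  then show ?thesis
    using lhs eqn m1 m2 unfolding FF D_def[symmetric] T_def[symmetric] X3_def[symmetric] X4_def[symmetric]
      X5_def[symmetric] F_def[symmetric] E_def[symmetric] r0_def[symmetric] r2_def[symmetric]
    by linarith
qed

lemma int_sum4:
  fixes g :: "nat \<Rightarrow> nat \<Rightarrow> nat \<Rightarrow> nat \<Rightarrow> 'a \<Rightarrow> real" and k :: nat
  assumes I: "\<And>i j i' j'. i < k \<Longrightarrow> j < k \<Longrightarrow> i' < k \<Longrightarrow> j' < k \<Longrightarrow> integrable M (g i j i' j')"
  shows "integral\<^sup>L M (\<lambda>u. \<Sum>i<k. \<Sum>j<k. \<Sum>i'<k. \<Sum>j'<k. g i j i' j' u) =
     (\<Sum>i<k. \<Sum>j<k. \<Sum>i'<k. \<Sum>j'<k. integral\<^sup>L M (g i j i' j'))"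
proof -
  have "integral\<^sup>L M (\<lambda>u. \<Sum>i<k. \<Sum>j<k. \<Sum>i'<k. \<Sum>j'<k. g i j i' j' u) =
     (\<Sum>i<k. integral\<^sup>L M (\<lambda>u. \<Sum>j<k. \<Sum>i'<k. \<Sum>j'<k. g i j i' j' u))"
    by (rule Bochner_Integration.integral_sum[where f = "\<lambda>i u. \<Sum>j<k. \<Sum>i'<k. \<Sum>j'<k. g i j i' j' u"]) (auto intro!: Bochner_Integration.integrable_sum I)
  also have "\<dots> = (\<Sum>i<k. \<Sum>j<k. integral\<^sup>L M (\<lambda>u. \<Sum>i'<k. \<Sum>j'<k. g i j i' j' u))"
    by (intro sum.cong refl Bochner_Integration.integral_sum[where f = "\<lambda>j u. \<Sum>i'<k. \<Sum>j'<k. g i j i' j' u" for i]) (auto intro!: Bochner_Integration.integrable_sum I)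
  also have "\<dots> = (\<Sum>i<k. \<Sum>j<k. \<Sum>i'<k. integral\<^sup>L M (\<lambda>u. \<Sum>j'<k. g i j i' j' u))"
    by (intro sum.cong refl Bochner_Integration.integral_sum[where f = "\<lambda>i' u. \<Sum>j'<k. g i j i' j' u" for i j]) (auto intro!: Bochner_Integration.integrable_sum I)
  also have "\<dots> = (\<Sum>i<k. \<Sum>j<k. \<Sum>i'<k. \<Sum>j'<k. integral\<^sup>L M (g i j i' j'))"
    by (intro sum.cong refl Bochner_Integration.integral_sum) (auto intro!: I)
  finally show ?thesis .
qed

context
  fixes f :: "real \<Rightarrow> real"
  assumes i0: "integrable stdGauss (\<lambda>z. f z)"
    and i1: "integrable stdGauss (\<lambda>z. f z * z)"
    and i2: "integrable stdGauss (\<lambda>z. f z * z\<^sup>2)"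
    and j0: "integrable stdGauss (\<lambda>z. (f z)\<^sup>2)"
    and j2: "integrable stdGauss (\<lambda>z. (f z)\<^sup>2 * z\<^sup>2)"
begin

lemma fmeas: "f \<in> borel_measurable stdGauss"
  using borel_measurable_integrable[OF i0] by simp

lemma int_12: "integrable stdGauss (\<lambda>x. x * (f x)\<^sup>2)"
proof (rule Bochner_Integration.integrable_bound[OF Bochner_Integration.integrable_add[OF j0 j2]])
  show "(\<lambda>x. x * (f x)\<^sup>2) \<in> borel_measurable stdGauss"
    using borel_measurable_integrable[OF sg_int1] borel_measurable_integrable[OF j0] by (rule borel_measurable_times)
  show "AE x in stdGauss. norm (x * (f x)\<^sup>2) \<le> norm ((f x)\<^sup>2 + (f x)\<^sup>2 * x\<^sup>2)"
  proof (rule AE_I2)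
    fix x :: real
    have "0 \<le> (\<bar>x\<bar> - 1)\<^sup>2" by simp
    then have "\<bar>x\<bar> \<le> 1 + x\<^sup>2" by (simp add: power2_diff power2_abs)
    then have "\<bar>x\<bar> * (f x)\<^sup>2 \<le> (1 + x\<^sup>2) * (f x)\<^sup>2" by (rule mult_right_mono) simp
    then show "norm (x * (f x)\<^sup>2) \<le> norm ((f x)\<^sup>2 + (f x)\<^sup>2 * x\<^sup>2)"
      by (simp add: abs_mult algebra_simps)
  qed
qed

lemma int_mom: "a \<le> 2 \<Longrightarrow> b \<le> 2 \<Longrightarrow> integrable stdGauss (\<lambda>x. x ^ a * f x ^ b)"
proof -
  assume a: "a \<le> 2" and b: "b \<le> 2"
  have d: "a = 0 \<or> a = 1 \<or> a = 2" "b = 0 \<or> b = 1 \<or> b = 2" using a b by auto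
  have a1: "integrable stdGauss (\<lambda>x. x * f x)" using i1 by (simp add: mult.commute)
  have a2: "integrable stdGauss (\<lambda>x. x\<^sup>2 * f x)" using i2 by (simp add: mult.commute)
  have b2: "integrable stdGauss (\<lambda>x. x\<^sup>2 * (f x)\<^sup>2)" using j2 by (simp add: mult.commute)
  have c0: "integrable stdGauss (\<lambda>x. 1::real)" using sg_moment(1)[of 0] by simp
  have c2: "integrable stdGauss (\<lambda>x. x\<^sup>2)" using sg_moment(1)[of 2] by simp
  note facts = a1 a2 b2 c0 c2 i0 j0 int_12 sg_int1
  show ?thesis using d by (elim disjE) (simp_all add: facts)
qed

lemma term_int:
  fixes k :: nat
  assumes "i < k" "j < k" "i' < k" "j' < k"
  shows "integrable (stdGaussVec k) (\<lambda>u. u j * f (u i) * u j' * f (u i'))"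
    "integral\<^sup>L (stdGaussVec k) (\<lambda>u. u j * f (u i) * u j' * f (u i')) =
       (\<Prod>l<k. mom f (cnt l j j') (cnt l i i'))"
proof -
  interpret product_sigma_finite "\<lambda>_::nat. stdGauss" by (rule psf)
  have I: "\<And>l. l \<in> {..<k} \<Longrightarrow> integrable stdGauss (\<lambda>x. x ^ cnt l j j' * f x ^ cnt l i i')"
    by (rule int_mom) (simp_all add: cnt_le)
  have eq: "(\<lambda>u. u j * f (u i) * u j' * f (u i')) = (\<lambda>u. \<Prod>l<k. u l ^ cnt l j j' * f (u l) ^ cnt l i i')"
    using term_prod[OF assms] by blast
  show "integrable (stdGaussVec k) (\<lambda>u. u j * f (u i) * u j' * f (u i'))"
    unfolding eq stdGaussVec_def
    by (rule product_integrable_prod[of "{..<k}" "\<lambda>l x. x ^ cnt l j j' * f x ^ cnt l i i'", simplified]) (use I in auto)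
  show "integral\<^sup>L (stdGaussVec k) (\<lambda>u. u j * f (u i) * u j' * f (u i')) =
       (\<Prod>l<k. mom f (cnt l j j') (cnt l i i'))"
    unfolding eq stdGaussVec_def mom_def
    by (rule product_integral_prod[of "{..<k}" "\<lambda>l x. x ^ cnt l j j' * f x ^ cnt l i i'", simplified]) (use I in auto)
qed

lemma main_f:
  fixes k :: nat and P :: "nat \<Rightarrow> nat \<Rightarrow> real"
  shows "integral\<^sup>L (stdGaussVec k) (\<lambda>u. (\<Sum>i<k. (\<Sum>j<k. P j i * u j) * f (u i))\<^sup>2) =
    (\<Sum>i<k. \<Sum>j<k. \<Sum>i'<k. \<Sum>j'<k. P j i * P j' i' *
       cform (mom f 0 1) (mom f 1 1) (mom f 2 1) (mom f 0 2) (mom f 2 2) i j i' j')"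
proof -
  have sq: "\<And>u. (\<Sum>i<k. (\<Sum>j<k. P j i * u j) * f (u i))\<^sup>2 =
    (\<Sum>i<k. \<Sum>j<k. \<Sum>i'<k. \<Sum>j'<k. P j i * P j' i' * (u j * f (u i) * u j' * f (u i')))"
  proof -
    fix u :: "nat \<Rightarrow> real"
    have "(\<Sum>i<k. (\<Sum>j<k. P j i * u j) * f (u i))\<^sup>2 =
      (\<Sum>i<k. \<Sum>i'<k. ((\<Sum>j<k. P j i * u j) * f (u i)) * ((\<Sum>j'<k. P j' i' * u j') * f (u i')))"
      by (simp add: power2_eq_square sum_product)
    also have "\<dots> = (\<Sum>i<k. \<Sum>i'<k. \<Sum>j<k. \<Sum>j'<k. P j i * P j' i' * (u j * f (u i) * u j' * f (u i')))"
    proof (intro sum.cong refl)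
      fix i i'
      have "(\<Sum>j<k. \<Sum>j'<k. P j i * P j' i' * (u j * f (u i) * u j' * f (u i'))) =
          (\<Sum>j<k. \<Sum>j'<k. (P j i * u j) * (P j' i' * u j')) * (f (u i) * f (u i'))"
        by (simp only: sum_distrib_right) (intro sum.cong refl; simp add: mult_ac)
      also have "\<dots> = (\<Sum>j<k. P j i * u j) * (\<Sum>j'<k. P j' i' * u j') * (f (u i) * f (u i'))"
        by (simp add: sum_product)
      finally show "((\<Sum>j<k. P j i * u j) * f (u i)) * ((\<Sum>j'<k. P j' i' * u j') * f (u i')) =
          (\<Sum>j<k. \<Sum>j'<k. P j i * P j' i' * (u j * f (u i) * u j' * f (u i')))"
        by (simp add: mult_ac)
    qed
    also have "\<dots> = (\<Sum>i<k. \<Sum>j<k. \<Sum>i'<k. \<Sum>j'<k. P j i * P j' i' * (u j * f (u i) * u j' * f (u i')))"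
      by (rule sum.cong[OF refl], rule sum.swap)
    finally show "?thesis u" .
  qed
  have I: "\<And>i j i' j'. i < k \<Longrightarrow> j < k \<Longrightarrow> i' < k \<Longrightarrow> j' < k \<Longrightarrow>
     integrable (stdGaussVec k) (\<lambda>u. P j i * P j' i' * (u j * f (u i) * u j' * f (u i')))"
    by (intro integrable_mult_right term_int)
  have V: "\<And>i j i' j'. i < k \<Longrightarrow> j < k \<Longrightarrow> i' < k \<Longrightarrow> j' < k \<Longrightarrow>
     integral\<^sup>L (stdGaussVec k) (\<lambda>u. P j i * P j' i' * (u j * f (u i) * u j' * f (u i'))) =
     P j i * P j' i' * cform (mom f 0 1) (mom f 1 1) (mom f 2 1) (mom f 0 2) (mom f 2 2) i j i' j'"
    by (simp add: term_int prod_cform)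
  show ?thesis
  proof -
    have "integral\<^sup>L (stdGaussVec k) (\<lambda>u. \<Sum>i<k. \<Sum>j<k. \<Sum>i'<k. \<Sum>j'<k. P j i * P j' i' * (u j * f (u i) * u j' * f (u i'))) =
      (\<Sum>i<k. \<Sum>j<k. \<Sum>i'<k. \<Sum>j'<k. integral\<^sup>L (stdGaussVec k) (\<lambda>u. P j i * P j' i' * (u j * f (u i) * u j' * f (u i'))))"
      by (rule int_sum4[where g = "\<lambda>i j i' j' u. P j i * P j' i' * (u j * f (u i) * u j' * f (u i'))", OF I])
    also have "\<dots> = (\<Sum>i<k. \<Sum>j<k. \<Sum>i'<k. \<Sum>j'<k. P j i * P j' i' *
       cform (mom f 0 1) (mom f 1 1) (mom f 2 1) (mom f 0 2) (mom f 2 2) i j i' j')"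
      by (intro sum.cong refl) (rule V; simp)
    finally show ?thesis by (simp only: sq)
  qed
qed

end

theorem mainTheorem6:
  fixes \<phi> \<phi>' :: "real \<Rightarrow> real" and k :: nat and P :: "nat \<Rightarrow> nat \<Rightarrow> real"
  assumes left_deriv: "\<And>x. (\<phi> has_real_derivative \<phi>' x) (at_left x)"
    and int_a0: "integrable stdGauss (\<lambda>z. \<phi>' z)"
    and int_a1: "integrable stdGauss (\<lambda>z. \<phi>' z * z)"
    and int_a2: "integrable stdGauss (\<lambda>z. \<phi>' z * z\<^sup>2)"
    and int_b0: "integrable stdGauss (\<lambda>z. (\<phi>' z)\<^sup>2)"
    and int_b2: "integrable stdGauss (\<lambda>z. (\<phi>' z)\<^sup>2 * z\<^sup>2)"
  defines "\<alpha>0 \<equiv> integral\<^sup>L stdGauss (\<lambda>z. \<phi>' z)"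
    and "\<alpha>1 \<equiv> integral\<^sup>L stdGauss (\<lambda>z. \<phi>' z * z)"
    and "\<alpha>2 \<equiv> integral\<^sup>L stdGauss (\<lambda>z. \<phi>' z * z\<^sup>2)"
    and "\<beta>0 \<equiv> integral\<^sup>L stdGauss (\<lambda>z. (\<phi>' z)\<^sup>2)"
    and "\<beta>2 \<equiv> integral\<^sup>L stdGauss (\<lambda>z. (\<phi>' z)\<^sup>2 * z\<^sup>2)"
  defines "\<rho> \<equiv> min (\<beta>0 - \<alpha>0\<^sup>2 - \<alpha>1\<^sup>2) (\<beta>2 - \<alpha>1\<^sup>2 - \<alpha>2\<^sup>2)"
  shows "integral\<^sup>L (stdGaussVec k)
           (\<lambda>u. (\<Sum>i<k. (\<Sum>j<k. P j i * u j) * \<phi>' (u i))\<^sup>2)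
         \<ge> \<rho> * (\<Sum>i<k. \<Sum>j<k. (P j i)\<^sup>2)"
proof -
  have A0: "mom \<phi>' 0 1 = \<alpha>0" unfolding mom_def \<alpha>0_def by simp
  have A1: "mom \<phi>' 1 1 = \<alpha>1" unfolding mom_def \<alpha>1_def by (simp add: mult.commute)
  have A2: "mom \<phi>' 2 1 = \<alpha>2" unfolding mom_def \<alpha>2_def by (simp add: mult.commute)
  have B0: "mom \<phi>' 0 2 = \<beta>0" unfolding mom_def \<beta>0_def by simp
  have B2: "mom \<phi>' 2 2 = \<beta>2" unfolding mom_def \<beta>2_def by (simp add: mult.commute)
  have "integral\<^sup>L (stdGaussVec k) (\<lambda>u. (\<Sum>i<k. (\<Sum>j<k. P j i * u j) * \<phi>' (u i))\<^sup>2) =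
    (\<Sum>i<k. \<Sum>j<k. \<Sum>i'<k. \<Sum>j'<k. P j i * P j' i' * cform \<alpha>0 \<alpha>1 \<alpha>2 \<beta>0 \<beta>2 i j i' j')"
    using main_f[OF int_a0 int_a1 int_a2 int_b0 int_b2, of k P] unfolding A0 A1 A2 B0 B2 .
  then show ?thesis unfolding sum_cform \<rho>_def using final_ineq by simp
qed

end
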